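(* Let $V=\{1,\#_p,\#_c,0\}$ and consider the truth-relation $\models_{\{1,\#_p\},\{1,\#_c\}}$. For every $n$ and every pair $(\mathcal{B}^p,\mathcal{B}^c)$ of premise/conclusion regularity rules for an $n$-ary connective, there is a unique truth function $f:V^n\to V$ satisfying this regularity rule at the level of truth values, i.e. such that for all $\gamma,\delta\subseteq V$ and $x_1,\dots,x_n\in V$: $\gamma\cup\{f(\vec x)\}\models\delta$ iff for all $(B_p,B_c)\in\mathcal{B}^p$, $\gamma\cup\{x_i:i\in B_p\}\models\{x_i:i\in B_c\}\cup\delta$; and $\gamma\models\{f(\vec x)\}\cup\delta$ iff for all $(B_p,B_c)\in\mathcal{B}^c$, $\gamma\cup\{x_i:i\in B_p\}\models\{x_i:i\in B_c\}\cup\delta$.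
   Context: Here $\models_{\mathcal{D}_p,\mathcal{D}_c}$ denotes the relation on $\mathcal{P}(V)\times\mathcal{P}(V)$: $\gamma\models_{\mathcal{D}_p,\mathcal{D}_c}\delta$ iff ($\gamma\subseteq\mathcal{D}_p\Rightarrow\delta\cap\mathcal{D}_c\neq\emptyset$). A regularity rule for an $n$-ary connective is a pair $\mathcal{B}^p,\mathcal{B}^c\subseteq\mathcal{P}(\{1,\dots,n\})\times\mathcal{P}(\{1,\dots,n\})$. Empty conjunctions count as true. *)

theory Defs
  imports Main
begin

datatype V = One | Hp | Hc | Zero

definition Dp :: "V set" where "Dp = {One, Hp}"
definition Dc :: "V set" where "Dc = {One, Hc}"

definition models :: "V set \<Rightarrow> V set \<Rightarrow> bool" where
  "models \<gamma> \<delta> \<longleftrightarrow> (\<gamma> \<subseteq> Dp \<longrightarrow> \<delta> \<inter> Dc \<noteq> {})"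

definition rule_set :: "nat \<Rightarrow> (nat set \<times> nat set) set \<Rightarrow> bool" where
  "rule_set n B \<longleftrightarrow> (\<forall>(Bp, Bc)\<in>B. Bp \<subseteq> {1..n} \<and> Bc \<subseteq> {1..n})"

text \<open>Tuples x_1..x_n in V^n are lists of length n; x_i = xs ! (i - 1).\<close>
definition vals :: "V list \<Rightarrow> nat set \<Rightarrow> V set" where
  "vals xs B = {xs ! (i - 1) | i. i \<in> B}"

definition satisfies_rule ::
  "nat \<Rightarrow> (nat set \<times> nat set) set \<Rightarrow> (nat set \<times> nat set) set \<Rightarrow> (V list \<Rightarrow> V) \<Rightarrow> bool" where
  "satisfies_rule n BP BC f \<longleftrightarrow>
     (\<forall>\<gamma> \<delta> xs. length xs = n \<longrightarrow>
        (models (\<gamma> \<union> {f xs}) \<delta> \<longleftrightarrow>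
           (\<forall>(Bp, Bc)\<in>BP. models (\<gamma> \<union> vals xs Bp) (vals xs Bc \<union> \<delta>))) \<and>
        (models \<gamma> ({f xs} \<union> \<delta>) \<longleftrightarrow>
           (\<forall>(Bp, Bc)\<in>BC. models (\<gamma> \<union> vals xs Bp) (vals xs Bc \<union> \<delta>))))"

end

theory Submission
  imports Defs
begin

lemma red1: "models (\<gamma> \<union> X) (Y \<union> \<delta>) \<longleftrightarrow> (\<gamma> \<subseteq> Dp \<and> \<delta> \<inter> Dc = {} \<longrightarrow> models X Y)"
  unfolding models_def by blast

lemma red2: "models (\<gamma> \<union> {v}) \<delta> \<longleftrightarrow> (\<gamma> \<subseteq> Dp \<and> \<delta> \<inter> Dc = {} \<longrightarrow> models {v} {})"
  unfolding models_def by blast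

lemma red3: "models \<gamma> ({v} \<union> \<delta>) \<longleftrightarrow> (\<gamma> \<subseteq> Dp \<and> \<delta> \<inter> Dc = {} \<longrightarrow> models {} {v})"
  unfolding models_def by blast

lemma char1:
  "(\<forall>\<gamma> \<delta>. models (\<gamma> \<union> {v}) \<delta> \<longleftrightarrow> (\<forall>(Bp, Bc)\<in>A. models (\<gamma> \<union> vals xs Bp) (vals xs Bc \<union> \<delta>)))
   \<longleftrightarrow> (models {v} {} \<longleftrightarrow> (\<forall>(Bp, Bc)\<in>A. models (vals xs Bp) (vals xs Bc)))"
proof
  assume H: "\<forall>\<gamma> \<delta>. models (\<gamma> \<union> {v}) \<delta> \<longleftrightarrow> (\<forall>(Bp, Bc)\<in>A. models (\<gamma> \<union> vals xs Bp) (vals xs Bc \<union> \<delta>))"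
  from H[rule_format, of "{}" "{}"] show "(models {v} {} \<longleftrightarrow> (\<forall>(Bp, Bc)\<in>A. models (vals xs Bp) (vals xs Bc)))"
    by simp
next
  assume E: "(models {v} {} \<longleftrightarrow> (\<forall>(Bp, Bc)\<in>A. models (vals xs Bp) (vals xs Bc)))"
  show "\<forall>\<gamma> \<delta>. models (\<gamma> \<union> {v}) \<delta> \<longleftrightarrow> (\<forall>(Bp, Bc)\<in>A. models (\<gamma> \<union> vals xs Bp) (vals xs Bc \<union> \<delta>))"
  proof (intro allI)
    fix \<gamma> \<delta>
    show "models (\<gamma> \<union> {v}) \<delta> \<longleftrightarrow> (\<forall>(Bp, Bc)\<in>A. models (\<gamma> \<union> vals xs Bp) (vals xs Bc \<union> \<delta>))"
      unfolding red1 red2 using E by (cases "\<gamma> \<subseteq> Dp \<and> \<delta> \<inter> Dc = {}") auto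
  qed
qed

lemma char2:
  "(\<forall>\<gamma> \<delta>. models \<gamma> ({v} \<union> \<delta>) \<longleftrightarrow> (\<forall>(Bp, Bc)\<in>A. models (\<gamma> \<union> vals xs Bp) (vals xs Bc \<union> \<delta>)))
   \<longleftrightarrow> (models {} {v} \<longleftrightarrow> (\<forall>(Bp, Bc)\<in>A. models (vals xs Bp) (vals xs Bc)))"
proof
  assume H: "\<forall>\<gamma> \<delta>. models \<gamma> ({v} \<union> \<delta>) \<longleftrightarrow> (\<forall>(Bp, Bc)\<in>A. models (\<gamma> \<union> vals xs Bp) (vals xs Bc \<union> \<delta>))"
  from H[rule_format, of "{}" "{}"] show "(models {} {v} \<longleftrightarrow> (\<forall>(Bp, Bc)\<in>A. models (vals xs Bp) (vals xs Bc)))"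
    by simp
next
  assume E: "(models {} {v} \<longleftrightarrow> (\<forall>(Bp, Bc)\<in>A. models (vals xs Bp) (vals xs Bc)))"
  show "\<forall>\<gamma> \<delta>. models \<gamma> ({v} \<union> \<delta>) \<longleftrightarrow> (\<forall>(Bp, Bc)\<in>A. models (\<gamma> \<union> vals xs Bp) (vals xs Bc \<union> \<delta>))"
  proof (intro allI)
    fix \<gamma> \<delta>
    show "models \<gamma> ({v} \<union> \<delta>) \<longleftrightarrow> (\<forall>(Bp, Bc)\<in>A. models (\<gamma> \<union> vals xs Bp) (vals xs Bc \<union> \<delta>))"
      unfolding red1 red3 using E by (cases "\<gamma> \<subseteq> Dp \<and> \<delta> \<inter> Dc = {}") auto
  qed
qed

definition PP where "PP A xs \<longleftrightarrow> (\<forall>(Bp, Bc)\<in>A. models (vals xs Bp) (vals xs Bc))"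

lemma sat_iff:
  "satisfies_rule n BP BC f \<longleftrightarrow>
   (\<forall>xs. length xs = n \<longrightarrow> (models {f xs} {} \<longleftrightarrow> PP BP xs) \<and> (models {} {f xs} \<longleftrightarrow> PP BC xs))"
proof -
  have "\<And>xs. ((\<forall>\<gamma> \<delta>. models (\<gamma> \<union> {f xs}) \<delta> \<longleftrightarrow> (\<forall>(Bp, Bc)\<in>BP. models (\<gamma> \<union> vals xs Bp) (vals xs Bc \<union> \<delta>))) \<and>
     (\<forall>\<gamma> \<delta>. models \<gamma> ({f xs} \<union> \<delta>) \<longleftrightarrow> (\<forall>(Bp, Bc)\<in>BC. models (\<gamma> \<union> vals xs Bp) (vals xs Bc \<union> \<delta>))))
    \<longleftrightarrow> (models {f xs} {} \<longleftrightarrow> PP BP xs) \<and> (models {} {f xs} \<longleftrightarrow> PP BC xs)"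
    unfolding PP_def by (simp only: char1 char2)
  then show ?thesis unfolding satisfies_rule_def by blast
qed

lemma V_eq: "(models {a} {} \<longleftrightarrow> models {b} {}) \<Longrightarrow> (models {} {a} \<longleftrightarrow> models {} {b}) \<Longrightarrow> a = (b::V)"
  by (cases a; cases b; simp add: models_def Dp_def Dc_def)

theorem theorem3p22:
  fixes n :: nat and BP BC :: "(nat set \<times> nat set) set"
  assumes "rule_set n BP" and "rule_set n BC"
  shows "\<exists>f. satisfies_rule n BP BC f \<and>
           (\<forall>g. satisfies_rule n BP BC g \<longrightarrow> (\<forall>xs. length xs = n \<longrightarrow> g xs = f xs))"
proof -
  define f where "f xs = (if PP BP xs then (if PP BC xs then Hc else Zero)
                          else (if PP BC xs then One else Hp))" for xs
  have sf: "satisfies_rule n BP BC f"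
    unfolding sat_iff f_def by (simp add: models_def Dp_def Dc_def)
  show ?thesis
  proof (intro exI conjI allI impI)
    show "satisfies_rule n BP BC f" by (rule sf)
    fix g and xs :: "V list" assume "satisfies_rule n BP BC g" "length xs = n"
    then show "g xs = f xs" using sf unfolding sat_iff by (metis V_eq)
  qed
qed

end
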